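(* Let $\Omega\subseteq\mathbb{R}^n$ be a domain and $\Psi:\Omega\to\mathbb{R}$ a strongly convex function bounded in $C^4$ (defining the Hessian metric $g=\sum\Psi_{ij}dx_idx_j$). Then there exists $\epsilon_0>0$ such that every Euclidean ball $B(p,\epsilon)\subseteq\Omega$ with $p\in\Omega$ and $\epsilon<\epsilon_0$ (in the primal coordinates $x$) is convex when expressed in the dual coordinates $\theta=\nabla\Psi$, i.e. $\nabla\Psi(B(p,\epsilon))$ is a convex subset of $\mathbb{R}^n$.
   Context: Strongly convex: the Hessian of $\Psi$ is bounded below by a positive multiple of the identity. Bounded in $C^4$: all partial derivatives of $\Psi$ up to order 4 are uniformly bounded on $\Omega$. Dual coordinates: $\theta^i=\partial\Psi/\partial x^i$. *)

theory Defs
  imports "HOL-Analysis.Analysis"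
begin

fun iter_partial :: "'a::euclidean_space list \<Rightarrow> ('a \<Rightarrow> real) \<Rightarrow> 'a \<Rightarrow> real" where
  "iter_partial [] f = f"
| "iter_partial (i # is) f = (\<lambda>x. frechet_derivative (iter_partial is f) (at x) i)"

definition Ck_on :: "nat \<Rightarrow> 'a::euclidean_space set \<Rightarrow> ('a \<Rightarrow> real) \<Rightarrow> bool" where
  "Ck_on k S f \<longleftrightarrow>
     (\<forall>is. set is \<subseteq> Basis \<and> length is < k \<longrightarrow> iter_partial is f differentiable_on S) \<and>
     (\<forall>is. set is \<subseteq> Basis \<and> length is \<le> k \<longrightarrow> continuous_on S (iter_partial is f))"

definition bounded_Ck_on :: "nat \<Rightarrow> 'a::euclidean_space set \<Rightarrow> ('a \<Rightarrow> real) \<Rightarrow> bool" where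
  "bounded_Ck_on k S f \<longleftrightarrow> Ck_on k S f \<and>
     (\<exists>M. \<forall>is. set is \<subseteq> Basis \<and> length is \<le> k \<longrightarrow> (\<forall>x\<in>S. \<bar>iter_partial is f x\<bar> \<le> M))"

definition hess_form :: "('a::euclidean_space \<Rightarrow> real) \<Rightarrow> 'a \<Rightarrow> 'a \<Rightarrow> real" where
  "hess_form f x v = (\<Sum>i\<in>Basis. \<Sum>j\<in>Basis. (v \<bullet> i) * (v \<bullet> j) * iter_partial [i, j] f x)"

definition strongly_convex_hess :: "'a::euclidean_space set \<Rightarrow> ('a \<Rightarrow> real) \<Rightarrow> bool" where
  "strongly_convex_hess S f \<longleftrightarrow>
     (\<exists>c>0. \<forall>x\<in>S. \<forall>v. hess_form f x v \<ge> c * (norm v)\<^sup>2)"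

definition grad :: "('a::euclidean_space \<Rightarrow> real) \<Rightarrow> 'a \<Rightarrow> 'a" where
  "grad f x = (\<Sum>i\<in>Basis. iter_partial [i] f x *\<^sub>R i)"

end

theory Submission
  imports Defs
begin

lemma taylor1:
  fixes F :: "'a::euclidean_space \<Rightarrow> 'a" and L :: "'a \<Rightarrow> 'a \<Rightarrow> 'a"
  assumes S: "convex S" and xS: "x \<in> S" and yS: "y \<in> S"
  and dF: "\<And>z. z \<in> S \<Longrightarrow> (F has_derivative L z) (at z within S)"
  and lip: "\<And>z v. z \<in> S \<Longrightarrow> norm (L z v - L y v) \<le> K * norm (z - y) * norm v"
  and K: "K \<ge> 0"
  shows "norm (F x - F y - L y (x - y)) \<le> K * (norm (x - y))^2"
proof -
  have lin: "linear (L y)" using dF[OF yS] has_derivative_linear by blast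
  define T where "T = closed_segment y x"
  have TS: "T \<subseteq> S" using S xS yS unfolding T_def by (simp add: closed_segment_subset)
  have d: "((\<lambda>z. F z - L y z) has_derivative (\<lambda>v. L z v - L y v)) (at z within T)" if "z \<in> T" for z
  proof -
    have "(F has_derivative L z) (at z within T)"
      using dF[of z] that TS has_derivative_subset by blast
    moreover have "(L y has_derivative L y) (at z within T)"
      using lin by (simp add: linear_imp_has_derivative)
    ultimately show ?thesis by (intro has_derivative_diff)
  qed
  have b: "onorm (\<lambda>v. L z v - L y v) \<le> K * norm (x - y)" if "z \<in> T" for z
  proof (rule onorm_le)
    fix v :: 'a
    have "norm (z - y) \<le> norm (x - y)" using segment_bound1[of z y x] that T_def by simp
    hence "K * norm (z - y) * norm v \<le> K * norm (x - y) * norm v"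
      using K by (simp add: mult_right_mono mult_left_mono)
    thus "norm (L z v - L y v) \<le> K * norm (x - y) * norm v" using lip[of z v] that TS by force
  qed
  have "norm ((F x - L y x) - (F y - L y y)) \<le> K * norm (x - y) * norm (x - y)"
    by (rule differentiable_bound[of T, OF _ d b]) (auto simp: T_def)
  moreover have "(F x - L y x) - (F y - L y y) = F x - F y - L y (x - y)"
    using lin by (simp add: linear_diff algebra_simps)
  ultimately show ?thesis by (simp add: power2_eq_square mult.assoc)
qed

lemma ball_max:
  fixes w p y :: "'a::euclidean_space"
  assumes r: "r > 0" and y: "y \<in> cball p r"
  and max: "\<And>x. x \<in> cball p r \<Longrightarrow> w \<bullet> (x - y) \<le> 0"
  and w: "w \<noteq> 0"
  shows "norm (y - p) = r \<and> w = (norm w / r) *\<^sub>R (y - p)"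
proof -
  define u where "u = y - p"
  have nu: "norm u \<le> r" using y by (simp add: u_def dist_norm norm_minus_commute)
  have nw: "norm w > 0" using w by simp
  define x where "x = p + (r / norm w) *\<^sub>R w"
  have "x \<in> cball p r" using r nw by (simp add: x_def dist_norm)
  hence "w \<bullet> (x - y) \<le> 0" by (rule max)
  moreover have "x - y = (r / norm w) *\<^sub>R w - u" by (simp add: x_def u_def)
  ultimately have "(r / norm w) * (w \<bullet> w) \<le> w \<bullet> u"
    by (simp add: inner_diff_right)
  moreover have "w \<bullet> w = norm w * norm w" using power2_norm_eq_inner[of w] by (simp add: power2_eq_square)
  ultimately have wu: "r * norm w \<le> w \<bullet> u" using nw by simp
  have "(norm ((r / norm w) *\<^sub>R w - u))^2 = r^2 - 2 * (r / norm w) * (w \<bullet> u) + (norm u)^2"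
  proof -
    have "(norm ((r / norm w) *\<^sub>R w - u))^2 = (r / norm w)^2 * (w \<bullet> w) - 2 * (r / norm w) * (w \<bullet> u) + u \<bullet> u"
      unfolding power2_norm_eq_inner
      by (simp add: inner_diff_left inner_diff_right inner_commute power2_eq_square algebra_simps)
    moreover have "w \<bullet> w = (norm w)^2" "u \<bullet> u = (norm u)^2" by (simp_all add: power2_norm_eq_inner)
    ultimately show ?thesis using nw by (simp add: power_divide)
  qed
  also have "\<dots> \<le> r^2 - 2 * (r / norm w) * (r * norm w) + r^2"
  proof -
    have "2 * (r / norm w) * (r * norm w) \<le> 2 * (r / norm w) * (w \<bullet> u)"
      using wu r nw by (intro mult_left_mono) auto
    moreover have "(norm u)^2 \<le> r^2" using nu by (simp add: power_mono)
    ultimately show ?thesis by linarith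
  qed
  also have "\<dots> = 0" using nw by (simp add: power2_eq_square)
  finally have "u = (r / norm w) *\<^sub>R w" by simp
  thus ?thesis using r nw by (simp add: u_def)
qed

lemma core:
  fixes \<Psi> :: "'a::euclidean_space \<Rightarrow> real" and F :: "'a \<Rightarrow> 'a" and L :: "'a \<Rightarrow> 'a \<Rightarrow> 'a"
  assumes cb: "cball p r \<subseteq> \<Omega>" and r: "r > 0"
  and dPsi: "\<And>z. z \<in> \<Omega> \<Longrightarrow> (\<Psi> has_derivative (\<lambda>v. F z \<bullet> v)) (at z)"
  and dF: "\<And>z. z \<in> \<Omega> \<Longrightarrow> (F has_derivative L z) (at z)"
  and pd: "\<And>z v. z \<in> \<Omega> \<Longrightarrow> c * (norm v)^2 \<le> v \<bullet> L z v"
  and lip: "\<And>z y v. z \<in> cball p r \<Longrightarrow> y \<in> cball p r \<Longrightarrow> norm (L z v - L y v) \<le> K * norm (z - y) * norm v"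
  and c: "c > 0" and K: "K \<ge> 0" and small: "2 * K * r < c"
  and x0: "x0 \<in> ball p r" and x1: "x1 \<in> ball p r" and t: "0 \<le> t" "t \<le> 1"
  shows "(1 - t) *\<^sub>R F x0 + t *\<^sub>R F x1 \<in> F ` ball p r"
proof -
  define \<theta> where "\<theta> = (1 - t) *\<^sub>R F x0 + t *\<^sub>R F x1"
  define \<phi> where "\<phi> z = \<Psi> z - \<theta> \<bullet> z" for z
  have dphi: "(\<phi> has_derivative (\<lambda>v. (F z - \<theta>) \<bullet> v)) (at z)" if "z \<in> \<Omega>" for z
  proof -
    have "((\<lambda>z. \<theta> \<bullet> z) has_derivative (\<lambda>v. \<theta> \<bullet> v)) (at z)"
      by (intro bounded_linear_imp_has_derivative bounded_linear_inner_right)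
    from has_derivative_diff[OF dPsi[OF that] this] show ?thesis
      by (simp add: \<phi>_def[abs_def] inner_diff_left)
  qed
  have "continuous_on (cball p r) \<phi>"
    using dphi cb by (intro continuous_at_imp_continuous_on) (auto intro: has_derivative_continuous)
  then obtain y where y: "y \<in> cball p r" and ymin: "\<And>x. x \<in> cball p r \<Longrightarrow> \<phi> y \<le> \<phi> x"
    using continuous_attains_inf[of "cball p r" \<phi>] r by force
  have yO: "y \<in> \<Omega>" using y cb by blast
  have var: "(\<theta> - F y) \<bullet> (x - y) \<le> 0" if x: "x \<in> cball p r" for x
  proof (rule ccontr)
    assume neg: "\<not> ?thesis"
    define g where "g s = \<phi> (y + s *\<^sub>R (x - y))" for s :: real
    have "((\<lambda>s. y + s *\<^sub>R (x - y)) has_derivative (\<lambda>s. s *\<^sub>R (x - y))) (at 0)"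
      by (auto intro!: derivative_eq_intros)
    moreover have "(\<phi> has_derivative (\<lambda>v. (F y - \<theta>) \<bullet> v)) (at (y + 0 *\<^sub>R (x - y)))"
      using dphi[OF yO] by simp
    ultimately have "((\<lambda>s. \<phi> (y + s *\<^sub>R (x - y))) has_derivative (\<lambda>s. (F y - \<theta>) \<bullet> (s *\<^sub>R (x - y)))) (at 0)"
      by (rule has_derivative_compose)
    hence "(g has_derivative (\<lambda>s. (F y - \<theta>) \<bullet> (s *\<^sub>R (x - y)))) (at 0)"
      by (simp add: g_def[abs_def])
    hence "(g has_real_derivative ((F y - \<theta>) \<bullet> (x - y))) (at 0)"
    proof -
      have "(\<lambda>s. (F y - \<theta>) \<bullet> (s *\<^sub>R (x - y))) = (*) ((F y - \<theta>) \<bullet> (x - y))"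
        by (rule ext) simp
      thus ?thesis using \<open>(g has_derivative _) (at 0)\<close> by (simp add: has_field_derivative_def)
    qed
    moreover have "(F y - \<theta>) \<bullet> (x - y) < 0" using neg
      by (simp add: inner_diff_left)
    ultimately obtain d where d: "d > 0" "\<And>h. h > 0 \<Longrightarrow> h < d \<Longrightarrow> g (0 + h) < g 0"
      using DERIV_neg_dec_right by blast
    define h where "h = min (d/2) 1"
    have h: "h > 0" "h < d" "h \<le> 1" using d by (auto simp: h_def)
    have "y + h *\<^sub>R (x - y) \<in> cball p r"
    proof -
      have "y + h *\<^sub>R (x - y) = (1 - h) *\<^sub>R y + h *\<^sub>R x" by (simp add: algebra_simps)
      thus ?thesis using convexD_alt[OF convex_cball y x, of h] h by simp
    qed
    hence "g 0 \<le> g h" using ymin by (simp add: g_def)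
    thus False using d(2)[OF h(1,2)] by simp
  qed
  define w where "w = \<theta> - F y"
  show ?thesis
  proof (cases "norm (y - p) < r")
    case True
    hence "w = 0" using ball_max[OF r y var] unfolding w_def by auto
    moreover have "y \<in> ball p r" using True by (simp add: dist_norm norm_minus_commute)
    ultimately show ?thesis by (auto simp: w_def \<theta>_def)
  next
    case False
    hence ny: "norm (y - p) = r" using y by (simp add: dist_norm norm_minus_commute)
    obtain lam where lam: "lam \<ge> 0" "w = lam *\<^sub>R (y - p)"
    proof (cases "w = 0")
      case True thus ?thesis using that[of 0] by simp
    next
      case False
      thus ?thesis using ball_max[OF r y var False[unfolded w_def]] that[of "norm w / r"] r
        unfolding w_def by auto
    qed
    define A where "A = L y"
    have linA: "linear A" using dF[OF yO] has_derivative_linear A_def by blast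
    have "inj (adjoint A)"
    proof (rule linear_inj_on_iff_eq_0[THEN iffD2])
      show "linear (adjoint A)" using linA adjoint_linear by blast
    next
      show "\<forall>n\<in>UNIV. adjoint A n = 0 \<longrightarrow> n = 0"
      proof clarify
        fix n assume "adjoint A n = 0"
        hence "A n \<bullet> n = 0" using adjoint_works[OF linA, of n n] by simp
        hence "c * (norm n)^2 \<le> 0" using pd[OF yO, of n] by (simp add: A_def inner_commute)
        thus "n = 0" using c by (simp add: mult_le_0_iff)
      qed
    qed (simp_all)
    hence "surj (adjoint A)" using linear_inj_imp_surj linA adjoint_linear by blast
    then obtain n where n: "adjoint A n = y - p" by (metis surjD)
    have An: "\<And>v. A v \<bullet> n = v \<bullet> (y - p)" using adjoint_works[OF linA] n by metis
    have nn: "c * (norm n)^2 \<le> n \<bullet> (y - p)" using pd[OF yO, of n] An[of n] by (simp add: A_def inner_commute)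
    also have "\<dots> \<le> norm n * r" using norm_cauchy_schwarz[of n "y - p"] ny by simp
    finally have "c * norm n * norm n \<le> r * norm n" by (simp add: power2_eq_square mult.assoc mult.commute[of r])
    hence nb: "c * norm n \<le> r"
    proof (cases "norm n = 0")
      case True thus ?thesis using r by simp
    next
      case False
      hence "norm n > 0" by simp
      from mult_right_le_imp_le[OF \<open>c * norm n * norm n \<le> r * norm n\<close> this] show ?thesis .
    qed
    have key: "(F x - F y) \<bullet> n < 0" if x: "x \<in> ball p r" for x
    proof -
      have xc: "x \<in> cball p r" using x by auto
      have tay: "norm (F x - F y - A (x - y)) \<le> K * (norm (x - y))^2"
        unfolding A_def
      proof (rule taylor1[of "cball p r"])
        show "\<And>z. z \<in> cball p r \<Longrightarrow> (F has_derivative L z) (at z within cball p r)"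
          using dF cb has_derivative_at_withinI by blast
      qed (use xc y lip K in auto)
      have "(F x - F y - A (x - y)) \<bullet> n \<le> norm (F x - F y - A (x - y)) * norm n"
        using norm_cauchy_schwarz by blast
      also have "\<dots> \<le> K * (norm (x - y))^2 * norm n" using tay by (simp add: mult_right_mono)
      also have "\<dots> \<le> K * (norm (x - y))^2 * (r / c)"
        using nb c K by (intro mult_left_mono) (auto simp: field_simps)
      also have "\<dots> \<le> (1/2) * (norm (x - y))^2"
      proof -
        have "K * r / c \<le> 1/2" using small c by (simp add: field_simps)
        hence "(K * r / c) * (norm (x - y))^2 \<le> (1/2) * (norm (x - y))^2"
          by (intro mult_right_mono) auto
        moreover have "K * (norm (x - y))^2 * (r / c) = (K * r / c) * (norm (x - y))^2" by simp
        ultimately show ?thesis by linarith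
      qed
      finally have R: "(F x - F y - A (x - y)) \<bullet> n \<le> (1/2) * (norm (x - y))^2" .
      have nx: "norm (x - p) < r" using x by (simp add: dist_norm norm_minus_commute)
      have "(norm (x - y))^2 = (norm ((x - p) - (y - p)))^2" by simp
      also have "\<dots> = (norm (x - p))^2 - 2 * ((x - p) \<bullet> (y - p)) + (norm (y - p))^2"
        by (simp add: power2_norm_eq_inner inner_diff_left inner_diff_right inner_commute)
      finally have e: "(norm (x - y))^2 = (norm (x - p))^2 - 2 * ((x - p) \<bullet> (y - p)) + r^2"
        using ny by simp
      have "(norm (x - p))^2 < r^2" using nx by (simp add: power_strict_mono)
      have xy: "(x - y) \<bullet> (y - p) = (x - p) \<bullet> (y - p) - r^2"
      proof -
        have "x - y = (x - p) - (y - p)" by simp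
        hence "(x - y) \<bullet> (y - p) = (x - p) \<bullet> (y - p) - (y - p) \<bullet> (y - p)"
          by (simp only: inner_diff_left)
        moreover have "(y - p) \<bullet> (y - p) = r^2" using ny power2_norm_eq_inner[of "y - p"] by simp
        ultimately show ?thesis by simp
      qed
      have "(F x - F y) \<bullet> n = (F x - F y - A (x - y)) \<bullet> n + A (x - y) \<bullet> n"
        by (simp add: inner_diff_left)
      also have "\<dots> = (F x - F y - A (x - y)) \<bullet> n + (x - y) \<bullet> (y - p)" using An by simp
      finally show ?thesis using R e xy \<open>(norm (x - p))^2 < r^2\<close> by linarith
    qed
    have "w \<bullet> n = lam * ((y - p) \<bullet> n)" using lam by simp
    also have "(y - p) \<bullet> n \<ge> 0" proof -
      have "0 \<le> c * (norm n)^2" using c by simp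
      thus ?thesis using nn by (simp add: inner_commute)
    qed
    hence "lam * ((y - p) \<bullet> n) \<ge> 0" using lam by simp
    finally have ge: "w \<bullet> n \<ge> 0" .
    have "w = (1 - t) *\<^sub>R (F x0 - F y) + t *\<^sub>R (F x1 - F y)"
      by (simp add: w_def \<theta>_def algebra_simps)
    hence "w \<bullet> n = (1 - t) * ((F x0 - F y) \<bullet> n) + t * ((F x1 - F y) \<bullet> n)"
      by (simp add: inner_add_left)
    moreover have "(1 - t) * ((F x0 - F y) \<bullet> n) + t * ((F x1 - F y) \<bullet> n) < 0"
    proof -
      have a: "(F x0 - F y) \<bullet> n < 0" "(F x1 - F y) \<bullet> n < 0" using key x0 x1 by auto
      show ?thesis
      proof (cases "t = 0")
        case True thus ?thesis using a by simp
      next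
        case False
        hence "t * ((F x1 - F y) \<bullet> n) < 0" using t a by (simp add: mult_pos_neg)
        moreover have "(1 - t) * ((F x0 - F y) \<bullet> n) \<le> 0" using t a by (simp add: mult_nonneg_nonpos)
        ultimately show ?thesis by linarith
      qed
    qed
    ultimately show ?thesis using ge by linarith
  qed
qed


lemma ip_cons: "iter_partial (i # is) f x = frechet_derivative (iter_partial is f) (at x) i"
  by simp

lemma linear_basis_real:
  fixes g :: "'a::euclidean_space \<Rightarrow> real"
  assumes "linear g"
  shows "g v = (\<Sum>i\<in>Basis. (v \<bullet> i) * g i)"
proof -
  have "g v = g (\<Sum>i\<in>Basis. (v \<bullet> i) *\<^sub>R i)" by (simp add: euclidean_representation)
  also have "\<dots> = (\<Sum>i\<in>Basis. (v \<bullet> i) * g i)"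
    using assms by (simp add: linear_sum linear_scale)
  finally show ?thesis .
qed

lemma deriv_basis:
  fixes f :: "'a::euclidean_space \<Rightarrow> real"
  assumes "f differentiable_on S" "open S" "x \<in> S"
  shows "(f has_derivative (\<lambda>v. \<Sum>i\<in>Basis. (v \<bullet> i) * frechet_derivative f (at x) i)) (at x)"
proof -
  have d: "f differentiable (at x)" using assms differentiable_on_eq_differentiable_at by blast
  hence h: "(f has_derivative frechet_derivative f (at x)) (at x)" using frechet_derivative_works by blast
  have "linear (frechet_derivative f (at x))" using d linear_frechet_derivative by blast
  hence "frechet_derivative f (at x) = (\<lambda>v. \<Sum>i\<in>Basis. (v \<bullet> i) * frechet_derivative f (at x) i)"
    using linear_basis_real by blast
  with h show ?thesis by simp
qed

lemma sum_abs_bound: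
  fixes v :: "'a::euclidean_space"
  assumes "\<And>i. i \<in> Basis \<Longrightarrow> \<bar>a i\<bar> \<le> M"
  shows "\<bar>\<Sum>i\<in>Basis. (v \<bullet> i) * a i\<bar> \<le> real DIM('a) * M * norm v"
proof -
  have "\<bar>\<Sum>i\<in>Basis. (v \<bullet> i) * a i\<bar> \<le> (\<Sum>i\<in>Basis. \<bar>(v \<bullet> i) * a i\<bar>)" by (rule sum_abs)
  also have "\<dots> \<le> (\<Sum>i\<in>(Basis::'a set). norm v * M)"
  proof (intro sum_mono)
    fix i :: 'a assume i: "i \<in> Basis"
    have "\<bar>v \<bullet> i\<bar> \<le> norm v" using Basis_le_norm[OF i] by simp
    thus "\<bar>(v \<bullet> i) * a i\<bar> \<le> norm v * M"
      unfolding abs_mult using assms[OF i] by (intro mult_mono) auto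
  qed
  also have "\<dots> = real DIM('a) * M * norm v" by simp
  finally show ?thesis .
qed


theorem mainTheorem5:
  fixes \<Omega> :: "'a::euclidean_space set" and \<Psi> :: "'a \<Rightarrow> real"
  assumes "open \<Omega>" and "connected \<Omega>" and "\<Omega> \<noteq> {}"
    and "strongly_convex_hess \<Omega> \<Psi>"
    and "bounded_Ck_on 4 \<Omega> \<Psi>"
  shows "\<exists>\<epsilon>0>0. \<forall>p\<in>\<Omega>. \<forall>\<epsilon>. 0 < \<epsilon> \<and> \<epsilon> < \<epsilon>0 \<and> ball p \<epsilon> \<subseteq> \<Omega>
           \<longrightarrow> convex (grad \<Psi> ` ball p \<epsilon>)"
proof -
  note op = assms(1)
  obtain c where c: "c > 0" and hc: "\<And>x v. x \<in> \<Omega> \<Longrightarrow> hess_form \<Psi> x v \<ge> c * (norm v)^2"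
    using assms(4) unfolding strongly_convex_hess_def by blast
  have ck: "Ck_on 4 \<Omega> \<Psi>" using assms(5) unfolding bounded_Ck_on_def by blast
  obtain M0 where M0: "\<And>is x. set is \<subseteq> Basis \<Longrightarrow> length is \<le> 4 \<Longrightarrow> x \<in> \<Omega> \<Longrightarrow> \<bar>iter_partial is \<Psi> x\<bar> \<le> M0"
    using assms(5) unfolding bounded_Ck_on_def by blast
  define M where "M = \<bar>M0\<bar>"
  have M: "M \<ge> 0" by (simp add: M_def)
  have dif: "\<And>is. set is \<subseteq> Basis \<Longrightarrow> length is < 4 \<Longrightarrow> iter_partial is \<Psi> differentiable_on \<Omega>"
    using ck unfolding Ck_on_def by blast
  define d1 where "d1 j x = iter_partial [j] \<Psi> x" for j x
  define d2 where "d2 i j x = iter_partial [i, j] \<Psi> x" for i j x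
  define d3 where "d3 k i j x = iter_partial [k, i, j] \<Psi> x" for k i j x
  define F where "F = grad \<Psi>"
  define L where "L x v = (\<Sum>j\<in>Basis. (\<Sum>i\<in>Basis. (v \<bullet> i) * d2 i j x) *\<^sub>R j)" for x v :: 'a
  have F_eq: "F x = (\<Sum>j\<in>Basis. d1 j x *\<^sub>R j)" for x
    by (simp add: F_def grad_def d1_def)
  have dPsi: "(\<Psi> has_derivative (\<lambda>v. F z \<bullet> v)) (at z)" if z: "z \<in> \<Omega>" for z
  proof -
    have "(iter_partial [] \<Psi> has_derivative (\<lambda>v. \<Sum>i\<in>Basis. (v \<bullet> i) * frechet_derivative (iter_partial [] \<Psi>) (at z) i)) (at z)"
      by (rule deriv_basis[OF dif op z]) auto
    moreover have "(\<lambda>v. \<Sum>i\<in>Basis. (v \<bullet> i) * frechet_derivative (iter_partial [] \<Psi>) (at z) i) = (\<lambda>v. F z \<bullet> v)"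
      by (rule ext) (simp add: F_eq d1_def inner_sum_right inner_commute mult.commute)
    ultimately show ?thesis by simp
  qed
  have dd1: "(d1 j has_derivative (\<lambda>v. \<Sum>i\<in>Basis. (v \<bullet> i) * d2 i j z)) (at z)"
    if z: "z \<in> \<Omega>" and j: "j \<in> Basis" for z j
  proof -
    have "(iter_partial [j] \<Psi> has_derivative (\<lambda>v. \<Sum>i\<in>Basis. (v \<bullet> i) * frechet_derivative (iter_partial [j] \<Psi>) (at z) i)) (at z)"
      by (rule deriv_basis[OF dif op z]) (use j in auto)
    moreover have "d1 j = iter_partial [j] \<Psi>" by (rule ext) (simp add: d1_def)
    moreover have "\<And>i. frechet_derivative (iter_partial [j] \<Psi>) (at z) i = d2 i j z"
      unfolding d2_def by (simp only: ip_cons)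
    ultimately show ?thesis by simp
  qed
  have dd2: "(d2 i j has_derivative (\<lambda>v. \<Sum>k\<in>Basis. (v \<bullet> k) * d3 k i j z)) (at z)"
    if z: "z \<in> \<Omega>" and j: "j \<in> Basis" and i: "i \<in> Basis" for z i j
  proof -
    have "(iter_partial [i, j] \<Psi> has_derivative (\<lambda>v. \<Sum>k\<in>Basis. (v \<bullet> k) * frechet_derivative (iter_partial [i, j] \<Psi>) (at z) k)) (at z)"
      by (rule deriv_basis[OF dif op z]) (use i j in auto)
    moreover have "d2 i j = iter_partial [i, j] \<Psi>" by (rule ext) (simp add: d2_def)
    moreover have "\<And>k. frechet_derivative (iter_partial [i, j] \<Psi>) (at z) k = d3 k i j z"
      unfolding d3_def by (simp only: ip_cons)
    ultimately show ?thesis by simp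
  qed
  have dF: "(F has_derivative L z) (at z)" if z: "z \<in> \<Omega>" for z
  proof -
    have "((\<lambda>x. \<Sum>j\<in>Basis. d1 j x *\<^sub>R j) has_derivative (\<lambda>v. \<Sum>j\<in>Basis. (\<Sum>i\<in>Basis. (v \<bullet> i) * d2 i j z) *\<^sub>R j)) (at z)"
      by (intro has_derivative_sum has_derivative_scaleR_left dd1[OF z]) 
    moreover have "(\<lambda>x. \<Sum>j\<in>Basis. d1 j x *\<^sub>R j) = F" using F_eq by (simp add: fun_eq_iff)
    ultimately show ?thesis by (simp add: L_def[abs_def])
  qed
  have pd: "c * (norm v)^2 \<le> v \<bullet> L z v" if z: "z \<in> \<Omega>" for z v
  proof -
    have "v \<bullet> L z v = (\<Sum>j\<in>Basis. \<Sum>i\<in>Basis. (v \<bullet> i) * (v \<bullet> j) * d2 i j z)"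
      by (simp add: L_def inner_sum_right sum_distrib_left sum_distrib_right mult.commute mult.left_commute)
    also have "\<dots> = hess_form \<Psi> z v"
      unfolding hess_form_def d2_def by (rule sum.swap)
    finally show ?thesis using hc[OF z] by simp
  qed
  define B where "B = real DIM('a) * M"
  have d2lip: "\<bar>d2 i j z - d2 i j y\<bar> \<le> B * norm (z - y)"
    if S: "convex S" "S \<subseteq> \<Omega>" and zS: "z \<in> S" and yS: "y \<in> S" and i: "i \<in> Basis" and j: "j \<in> Basis" for S z y i j
  proof -
    have "norm (d2 i j z - d2 i j y) \<le> B * norm (z - y)"
    proof (rule differentiable_bound[OF S(1) _ _ zS yS])
      fix x assume x: "x \<in> S"
      show "(d2 i j has_derivative (\<lambda>v. \<Sum>k\<in>Basis. (v \<bullet> k) * d3 k i j x)) (at x within S)"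
        using dd2[of x j i] x S i j has_derivative_at_withinI by blast
      show "onorm (\<lambda>v. \<Sum>k\<in>Basis. (v \<bullet> k) * d3 k i j x) \<le> B"
      proof (rule onorm_le)
        fix v :: 'a
        have "\<bar>\<Sum>k\<in>Basis. (v \<bullet> k) * d3 k i j x\<bar> \<le> real DIM('a) * M * norm v"
        proof (rule sum_abs_bound)
          fix k :: 'a assume k: "k \<in> Basis"
          show "\<bar>d3 k i j x\<bar> \<le> M" unfolding d3_def M_def
            using M0[of "[k, i, j]" x] k i j x S by force
        qed
        thus "norm (\<Sum>k\<in>Basis. (v \<bullet> k) * d3 k i j x) \<le> B * norm v" by (simp add: B_def)
      qed
    qed
    thus ?thesis by simp
  qed
  define K where "K = real DIM('a) * real DIM('a) * B"
  have K: "K \<ge> 0" using M by (simp add: K_def B_def)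
  have lip: "norm (L z v - L y v) \<le> K * norm (z - y) * norm v"
    if S: "convex S" "S \<subseteq> \<Omega>" and zS: "z \<in> S" and yS: "y \<in> S" for S z y v
  proof -
    have "L z v - L y v = (\<Sum>j\<in>Basis. (\<Sum>i\<in>Basis. (v \<bullet> i) * (d2 i j z - d2 i j y)) *\<^sub>R j)"
      by (simp add: L_def sum_subtractf[symmetric] scaleR_diff_left[symmetric] right_diff_distrib)
    also have "norm \<dots> \<le> (\<Sum>j\<in>Basis. norm ((\<Sum>i\<in>Basis. (v \<bullet> i) * (d2 i j z - d2 i j y)) *\<^sub>R j))"
      by (rule norm_sum)
    also have "\<dots> \<le> (\<Sum>j\<in>(Basis::'a set). real DIM('a) * (B * norm (z - y)) * norm v)"
    proof (intro sum_mono)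
      fix j :: 'a assume j: "j \<in> Basis"
      have "\<bar>\<Sum>i\<in>Basis. (v \<bullet> i) * (d2 i j z - d2 i j y)\<bar> \<le> real DIM('a) * (B * norm (z - y)) * norm v"
        by (rule sum_abs_bound) (use d2lip[OF S zS yS _ j] in auto)
      thus "norm ((\<Sum>i\<in>Basis. (v \<bullet> i) * (d2 i j z - d2 i j y)) *\<^sub>R j) \<le> real DIM('a) * (B * norm (z - y)) * norm v"
        using j by simp
    qed
    also have "\<dots> = K * norm (z - y) * norm v" by (simp add: K_def)
    finally show ?thesis .
  qed
  define e0 where "e0 = c / (2 * K + 1)"
  have e0: "e0 > 0" using c K by (simp add: e0_def)
  show ?thesis
  proof (intro exI[of _ e0] conjI e0 ballI allI impI)
    fix p \<epsilon> assume p: "p \<in> \<Omega>" and h: "0 < \<epsilon> \<and> \<epsilon> < e0 \<and> ball p \<epsilon> \<subseteq> \<Omega>"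
    show "convex (grad \<Psi> ` ball p \<epsilon>)"
      unfolding convex_alt
    proof (intro ballI allI impI)
      fix a b and u :: real assume a: "a \<in> grad \<Psi> ` ball p \<epsilon>" and b: "b \<in> grad \<Psi> ` ball p \<epsilon>" and u: "0 \<le> u \<and> u \<le> 1"
      obtain x0 where x0: "x0 \<in> ball p \<epsilon>" "a = F x0" using a F_def by blast
      obtain x1 where x1: "x1 \<in> ball p \<epsilon>" "b = F x1" using b F_def by blast
      define r where "r = (max (dist p x0) (dist p x1) + \<epsilon>) / 2"
      have "0 \<le> max (dist p x0) (dist p x1)" by (simp add: le_max_iff_disj)
      moreover have "max (dist p x0) (dist p x1) < \<epsilon>" using x0 x1 by simp
      ultimately have r: "r > 0" "r < \<epsilon>" using h by (auto simp: r_def)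
      have x0r: "x0 \<in> ball p r" and x1r: "x1 \<in> ball p r" using x0 x1 by (auto simp: r_def)
      have cb: "cball p r \<subseteq> \<Omega>" proof -
        have "cball p r \<subseteq> ball p \<epsilon>" using r by (simp add: cball_subset_ball_iff)
        thus ?thesis using h by blast
      qed
      have sm: "2 * K * r < c"
      proof -
        have "2 * K * r \<le> (2 * K + 1) * r" using r by (simp add: algebra_simps)
        also have "\<dots> < (2 * K + 1) * e0" using r h K by (intro mult_strict_left_mono) auto
        also have "\<dots> = c" using K by (simp add: e0_def)
        finally show ?thesis .
      qed
      have "(1 - u) *\<^sub>R F x0 + u *\<^sub>R F x1 \<in> F ` ball p r"
        by (rule core[of p r \<Omega> \<Psi> F L c K]) 
           (use cb r dPsi dF pd lip[OF convex_cball cb] c K sm x0r x1r u in auto)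
      moreover have "F ` ball p r \<subseteq> F ` ball p \<epsilon>" using r by (intro image_mono subset_ball) simp
      ultimately show "(1 - u) *\<^sub>R a + u *\<^sub>R b \<in> grad \<Psi> ` ball p \<epsilon>"
        using x0 x1 F_def by auto
    qed
  qed
qed

end
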